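(* Every finite abelian group is completely $\Phi$-realisable.
   Context: All groups are finite. $\Phi(H)$ denotes the Frattini subgroup of $H$. A finite group $G$ is completely $\Phi$-realisable if there is a finite group $H$ such that: (i) $G\cong \Phi(H)$; (ii) for every subgroup $G_1\leq G$ there exists $H_1\leq H$ with $G_1\cong \Phi(H_1)$; (iii) for every $H_1\leq H$ there exists $G_1\leq G$ with $\Phi(H_1)\cong G_1$. *)

theory Defs
  imports "HOL-Algebra.Algebra"
begin

definition maximal_subgroup :: "'a set \<Rightarrow> ('a, 'b) monoid_scheme \<Rightarrow> bool" where
  "maximal_subgroup M G \<longleftrightarrow> subgroup M G \<and> M \<noteq> carrier G \<and>
     (\<forall>K. subgroup K G \<and> M \<subseteq> K \<longrightarrow> K = M \<or> K = carrier G)"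

text \<open>Frattini subgroup: intersection of all maximal subgroups (the whole group if there are none).\<close>
definition frattini :: "('a, 'b) monoid_scheme \<Rightarrow> 'a set" where
  "frattini G = carrier G \<inter> \<Inter> {M. maximal_subgroup M G}"

definition frattini_group :: "('a, 'b) monoid_scheme \<Rightarrow> ('a, 'b) monoid_scheme" where
  "frattini_group G = G\<lparr>carrier := frattini G\<rparr>"

text \<open>Completely Phi-realisable. The witness group H is taken with carrier in nat;
  every finite group is isomorphic to one of this form.\<close>
definition completely_Phi_realisable :: "('a, 'b) monoid_scheme \<Rightarrow> bool" where
  "completely_Phi_realisable G \<longleftrightarrow>
    (\<exists>H :: nat monoid. group H \<and> finite (carrier H) \<and>
       G \<cong> frattini_group H \<and>
       (\<forall>G1. subgroup G1 G \<longrightarrow>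
          (\<exists>H1. subgroup H1 H \<and> G\<lparr>carrier := G1\<rparr> \<cong> frattini_group (H\<lparr>carrier := H1\<rparr>))) \<and>
       (\<forall>H1. subgroup H1 H \<longrightarrow>
          (\<exists>G1. subgroup G1 G \<and> frattini_group (H\<lparr>carrier := H1\<rparr>) \<cong> G\<lparr>carrier := G1\<rparr>)))"

end

theory Submission
  imports Defs "HOL-Computational_Algebra.Primes"
begin
definition span_el :: "('a,'b) monoid_scheme \<Rightarrow> 'a set \<Rightarrow> 'a \<Rightarrow> 'a set" where
  "span_el G M b = {m \<otimes>\<^bsub>G\<^esub> b [^]\<^bsub>G\<^esub> (j::nat) | m j. m \<in> M}"

lemma subgroup_pow_closed:
  assumes "subgroup H G" "x \<in> H" shows "x [^]\<^bsub>G\<^esub> (n::nat) \<in> H"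
proof (induct n)
  case 0 then show ?case using subgroup.one_closed[OF assms(1)] by simp
next
  case (Suc n) then show ?case using subgroup.m_closed[OF assms(1)] assms(2) by simp
qed

context comm_group
begin

lemma pow_image_subgroup:
  assumes H: "subgroup H G"
  shows "subgroup ((\<lambda>x. x [^] (k::nat)) ` H) G"
proof (rule subgroupI)
  have Hc: "H \<subseteq> carrier G" using subgroup.subset[OF H] .
  show "(\<lambda>x. x [^] k) ` H \<subseteq> carrier G" using Hc by auto
  show "(\<lambda>x. x [^] k) ` H \<noteq> {}" using subgroup.one_closed[OF H] by blast
  show "inv a \<in> (\<lambda>x. x [^] k) ` H" if asm: "a \<in> (\<lambda>x. x [^] k) ` H" for a
  proof -
    obtain y where y: "y \<in> H" "a = y [^] k" using asm by blast
    have yc: "y \<in> carrier G" using y Hc by blast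
    have "inv a = (inv y) [^] k" using y(2) nat_pow_inv[OF yc, of k] by simp
    moreover have "inv y \<in> H" using subgroup.m_inv_closed[OF H y(1)] .
    ultimately show ?thesis by blast
  qed
  show "a \<otimes> b \<in> (\<lambda>x. x [^] k) ` H" if asm: "a \<in> (\<lambda>x. x [^] k) ` H" "b \<in> (\<lambda>x. x [^] k) ` H" for a b
  proof -
    obtain y where y: "y \<in> H" "a = y [^] k" using asm(1) by blast
    obtain z where z: "z \<in> H" "b = z [^] k" using asm(2) by blast
    have yc: "y \<in> carrier G" "z \<in> carrier G" using y z Hc by auto
    have "a \<otimes> b = (y \<otimes> z) [^] k" using y(2) z(2) nat_pow_distrib[OF yc, of k] by simp
    moreover have "y \<otimes> z \<in> H" using subgroup.m_closed[OF H y(1) z(1)] .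
    ultimately show ?thesis by blast
  qed
qed

lemma pow_mul_inv_one:
  assumes b: "b \<in> carrier G" and N: "N > 0" and exN: "\<forall>x\<in>carrier G. x [^] (N::nat) = \<one>"
  shows "b [^] (j::nat) \<otimes> b [^] (j * (N - 1)) = \<one>"
proof -
  have "b [^] j \<otimes> b [^] (j * (N - 1)) = b [^] (j + j * (N - 1))" using nat_pow_mult[OF b] by simp
  also have "j + j * (N - 1) = N * j" using N by (cases N) auto
  also have "b [^] (N * j) = (b [^] N) [^] j" using nat_pow_pow[OF b] by simp
  also have "\<dots> = \<one>" using exN b by simp
  finally show ?thesis .
qed

lemma span_el_subgroup:
  assumes M: "subgroup M G" and b: "b \<in> carrier G" and N: "N > 0" and exN: "\<forall>x\<in>carrier G. x [^] (N::nat) = \<one>"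
  shows "subgroup (span_el G M b) G"
proof (rule subgroupI)
  have Mc: "M \<subseteq> carrier G" using subgroup.subset[OF M] .
  show "span_el G M b \<subseteq> carrier G" using Mc b by (auto simp: span_el_def)
  show "span_el G M b \<noteq> {}" using subgroup.one_closed[OF M] unfolding span_el_def by blast
  show "inv a \<in> span_el G M b" if asm: "a \<in> span_el G M b" for a
  proof -
    obtain m and j::nat where mj: "m \<in> M" "a = m \<otimes> b [^] j" using asm unfolding span_el_def by blast
    have mc: "m \<in> carrier G" using mj Mc by blast
    have bj: "b [^] j \<in> carrier G" "b [^] (j * (N - 1)) \<in> carrier G" using b by auto
    have e: "b [^] j \<otimes> b [^] (j * (N - 1)) = \<one>" by (rule pow_mul_inv_one[OF b N exN])
    have "b [^] (j * (N - 1)) \<otimes> b [^] j = \<one>" using e m_comm[OF bj] by simp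
    then have ib: "inv (b [^] j) = b [^] (j * (N - 1))" using inv_equality[OF _ bj] by simp
    have "inv a = inv m \<otimes> inv (b [^] j)" using mj(2) inv_mult[OF mc bj(1)] by simp
    then have "inv a = inv m \<otimes> b [^] (j * (N - 1))" using ib by simp
    moreover have "inv m \<in> M" using subgroup.m_inv_closed[OF M mj(1)] .
    ultimately show ?thesis unfolding span_el_def by blast
  qed
  show "a \<otimes> c \<in> span_el G M b" if asm: "a \<in> span_el G M b" "c \<in> span_el G M b" for a c
  proof -
    obtain m and j::nat where mj: "m \<in> M" "a = m \<otimes> b [^] j" using asm(1) unfolding span_el_def by blast
    obtain m' and j'::nat where mj': "m' \<in> M" "c = m' \<otimes> b [^] j'" using asm(2) unfolding span_el_def by blast
    have mc: "m \<in> carrier G" "m' \<in> carrier G" using mj mj' Mc by auto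
    have bj: "b [^] j \<in> carrier G" "b [^] j' \<in> carrier G" using b by auto
    have "a \<otimes> c = m \<otimes> (b [^] j \<otimes> (m' \<otimes> b [^] j'))" using mj(2) mj'(2) mc bj by (simp add: m_assoc)
    also have "\<dots> = m \<otimes> (m' \<otimes> (b [^] j \<otimes> b [^] j'))" using mc bj m_lcomm by simp
    also have "\<dots> = (m \<otimes> m') \<otimes> b [^] (j + j')" using mc bj b nat_pow_mult[OF b] by (simp add: m_assoc)
    finally have "a \<otimes> c = (m \<otimes> m') \<otimes> b [^] (j + j')" .
    moreover have "m \<otimes> m' \<in> M" using subgroup.m_closed[OF M mj(1) mj'(1)] .
    ultimately show ?thesis unfolding span_el_def by blast
  qed
qed

lemma span_el_sup: 
  assumes M: "subgroup M G" and b: "b \<in> carrier G"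
  shows "M \<subseteq> span_el G M b" "b \<in> span_el G M b"
proof -
  have Mc: "M \<subseteq> carrier G" using subgroup.subset[OF M] .
  show "M \<subseteq> span_el G M b"
  proof
    fix m assume m: "m \<in> M"
    then have "m = m \<otimes> b [^] (0::nat)" using Mc by auto
    then show "m \<in> span_el G M b" using m unfolding span_el_def by blast
  qed
  have "b = \<one> \<otimes> b [^] (1::nat)" using b by simp
  then show "b \<in> span_el G M b" using subgroup.one_closed[OF M] unfolding span_el_def by blast
qed

end

abbreviation nprime :: "nat \<Rightarrow> bool" where "nprime p \<equiv> Factorial_Ring.prime p"

context comm_group
begin

lemma min_power:
  assumes M: "subgroup M G" and a: "a \<in> carrier G" and N: "N > 0" and exN: "\<forall>x\<in>carrier G. x [^] (N::nat) = \<one>"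
  obtains k where "k > 0" "a [^] k \<in> M" "\<And>t::nat. a [^] t \<in> M \<Longrightarrow> k dvd t"
proof -
  define k where "k = (LEAST k::nat. 0 < k \<and> a [^] k \<in> M)"
  have aN: "a [^] N = \<one>" using exN a by blast
  have ex: "0 < N \<and> a [^] N \<in> M" using N aN subgroup.one_closed[OF M] by simp
  have k: "0 < k \<and> a [^] k \<in> M" unfolding k_def by (rule LeastI, rule ex)
  have kmin: "\<And>s. 0 < s \<and> a [^] s \<in> M \<Longrightarrow> k \<le> s" unfolding k_def by (rule Least_le)
  have kd: "k dvd t" if t: "a [^] t \<in> M" for t::nat
  proof -
    have "a [^] t = a [^] (k * (t div k) + t mod k)" by simp
    also have "\<dots> = a [^] (k * (t div k)) \<otimes> a [^] (t mod k)" using a by (simp add: nat_pow_mult)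
    also have "\<dots> = (a [^] k) [^] (t div k) \<otimes> a [^] (t mod k)" using a by (simp add: nat_pow_pow)
    finally have e: "a [^] t = (a [^] k) [^] (t div k) \<otimes> a [^] (t mod k)" .
    have X: "(a [^] k) [^] (t div k) \<in> carrier G" "a [^] (t mod k) \<in> carrier G" using a by auto
    have "inv ((a [^] k) [^] (t div k)) \<otimes> a [^] t = inv ((a [^] k) [^] (t div k)) \<otimes> ((a [^] k) [^] (t div k) \<otimes> a [^] (t mod k))"
      using e by simp
    also have "\<dots> = a [^] (t mod k)" using X by (simp add: m_assoc[symmetric])
    finally have "a [^] (t mod k) = inv ((a [^] k) [^] (t div k)) \<otimes> a [^] t" by simp
    moreover have "(a [^] k) [^] (t div k) \<in> M"
      using subgroup_pow_closed[OF M, of "a [^] k"] k by blast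
    ultimately have "a [^] (t mod k) \<in> M" using t subgroup.m_closed[OF M] subgroup.m_inv_closed[OF M] by metis
    have "t mod k = 0"
    proof (rule ccontr)
      assume "t mod k \<noteq> 0"
      then have "k \<le> t mod k" using kmin \<open>a [^] (t mod k) \<in> M\<close> by blast
      moreover have "t mod k < k" using k by simp
      ultimately show False by simp
    qed
    then show ?thesis by auto
  qed
  show ?thesis using k kd by (intro that[of k]) auto
qed

lemma maximal_contains_pow:
  assumes M: "maximal_subgroup M G" and N: "N > 0" and exN: "\<forall>x\<in>carrier G. x [^] (N::nat) = \<one>"
  shows "\<exists>p. nprime p \<and> p dvd N \<and> (\<forall>x\<in>carrier G. x [^] p \<in> M)"
proof -
  have Ms: "subgroup M G" and Mne: "M \<noteq> carrier G"
    and Mmax: "\<And>K. subgroup K G \<Longrightarrow> M \<subseteq> K \<Longrightarrow> K = M \<or> K = carrier G"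
    using M unfolding maximal_subgroup_def by auto
  have Mc: "M \<subseteq> carrier G" using subgroup.subset[OF Ms] .
  obtain a where a: "a \<in> carrier G" "a \<notin> M" using Mc Mne by blast
  obtain k where k: "k > 0" "a [^] k \<in> M" "\<And>t::nat. a [^] t \<in> M \<Longrightarrow> k dvd t"
    using min_power[OF Ms a(1) N exN] by blast
  have "k \<noteq> 1" using k a by auto
  then obtain p where p: "nprime p" "p dvd k" using prime_factor_nat by blast
  have "a [^] N \<in> M" using exN a subgroup.one_closed[OF Ms] by simp
  then have kN: "k dvd N" using k(3) by blast
  have ap: "a [^] p \<in> carrier G" using a by simp
  have L: "subgroup (span_el G M (a [^] p)) G" by (rule span_el_subgroup[OF Ms ap N exN])
  have "a [^] p \<in> M"
  proof (cases "span_el G M (a [^] p) = M")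
    case True then show ?thesis using span_el_sup[OF Ms ap] by blast
  next
    case False
    then have "span_el G M (a [^] p) = carrier G" using Mmax[OF L] span_el_sup[OF Ms ap] by blast
    then have "a \<in> span_el G M (a [^] p)" using a by blast
    then obtain m and j::nat where mj: "m \<in> M" "a = m \<otimes> (a [^] p) [^] j" unfolding span_el_def by blast
    have c: "(a [^] p) [^] j \<otimes> (a [^] p) [^] (j * (N - 1)) = \<one>"
      by (rule pow_mul_inv_one[OF ap N exN])
    have mc: "m \<in> carrier G" using mj Mc by blast
    have "a \<otimes> (a [^] p) [^] (j * (N - 1)) = (m \<otimes> (a [^] p) [^] j) \<otimes> (a [^] p) [^] (j * (N - 1))"
      using mj by simp
    also have "\<dots> = m \<otimes> ((a [^] p) [^] j \<otimes> (a [^] p) [^] (j * (N - 1)))"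
      using mc ap by (simp add: m_assoc)
    also have "\<dots> = m" using c mc by simp
    finally have e1: "a \<otimes> (a [^] p) [^] (j * (N - 1)) = m" .
    have "a \<otimes> (a [^] p) [^] (j * (N - 1)) = a [^] (1 + p * (j * (N - 1)))"
      using a by (simp add: nat_pow_mult[symmetric] nat_pow_pow m_comm)
    then have "a [^] (1 + p * (j * (N - 1))) \<in> M" using mj e1 by simp
    then have "k dvd 1 + p * (j * (N - 1))" using k by blast
    then have "p dvd 1 + p * (j * (N - 1))" using p dvd_trans by blast
    then have "p dvd 1" using dvd_add_left_iff[of p "p * (j * (N - 1))" 1] by simp
    then show ?thesis using p by auto
  qed
  have La: "subgroup (span_el G M a) G" by (rule span_el_subgroup[OF Ms a(1) N exN])
  have "span_el G M a = carrier G" using Mmax[OF La] span_el_sup[OF Ms a(1)] a by blast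
  have "x [^] p \<in> M" if x: "x \<in> carrier G" for x
  proof -
    obtain m and j::nat where mj: "m \<in> M" "x = m \<otimes> a [^] j"
      using x \<open>span_el G M a = carrier G\<close> unfolding span_el_def by blast
    have mc: "m \<in> carrier G" using mj Mc by blast
    have "x [^] p = m [^] p \<otimes> (a [^] j) [^] p"
      using mj(2) nat_pow_distrib[OF mc, of "a [^] j" p] a by simp
    also have "(a [^] j) [^] p = (a [^] p) [^] j" using a by (simp add: nat_pow_pow mult.commute)
    finally have e: "x [^] p = m [^] p \<otimes> (a [^] p) [^] j" .
    have "m [^] p \<in> M" using subgroup_pow_closed[OF Ms, of m] mj by blast
    moreover have "(a [^] p) [^] j \<in> M" using subgroup_pow_closed[OF Ms, of "a [^] p"] \<open>a [^] p \<in> M\<close> by blast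
    ultimately show ?thesis using e subgroup.m_closed[OF Ms] by simp
  qed
  then show ?thesis using p kN dvd_trans by blast
qed

end

context comm_group
begin

lemma coprime_pow_inter:
  assumes ab: "coprime a b" and y: "y \<in> carrier G" and z: "z \<in> carrier G"
    and xa: "x = y [^] (a::nat)" and xb: "x = z [^] (b::nat)"
  shows "\<exists>w\<in>carrier G. x = w [^] (a * b)"
proof -
  obtain u v :: int where uv: "u * int a + v * int b = gcd (int a) (int b)" using bezout_int by blast
  have "gcd (int a) (int b) = 1" using ab by simp
  then have uv1: "u * int a + v * int b = 1" using uv by simp
  have xc: "x \<in> carrier G" using xa y by simp
  have x1: "x = x [^] (u * int a + v * int b)" using uv1 xc by simp
  also have "\<dots> = x [^] (u * int a) \<otimes> x [^] (v * int b)" using int_pow_mult[OF xc] by simp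
  also have "x [^] (u * int a) = (z [^] u) [^] (int (a * b))"
  proof -
    have "x [^] (u * int a) = (z [^] (int b)) [^] (u * int a)" using xb int_pow_int by metis
    also have "\<dots> = z [^] (int b * (u * int a))" using int_pow_pow[OF z] by simp
    also have "\<dots> = z [^] (u * int (a * b))" by (simp add: ac_simps)
    also have "\<dots> = (z [^] u) [^] (int (a * b))" using int_pow_pow[OF z] by simp
    finally show ?thesis .
  qed
  also have "x [^] (v * int b) = (y [^] v) [^] (int (a * b))"
  proof -
    have "x [^] (v * int b) = (y [^] (int a)) [^] (v * int b)" using xa int_pow_int by metis
    also have "\<dots> = y [^] (int a * (v * int b))" using int_pow_pow[OF y] by simp
    also have "\<dots> = y [^] (v * int (a * b))" by (simp add: ac_simps)
    also have "\<dots> = (y [^] v) [^] (int (a * b))" using int_pow_pow[OF y] by simp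
    finally show ?thesis .
  qed
  also have "(z [^] u) [^] (int (a * b)) \<otimes> (y [^] v) [^] (int (a * b)) = (z [^] u \<otimes> y [^] v) [^] (int (a * b))"
    using int_pow_distrib[of "z [^] u" "y [^] v"] y z by simp
  also have "\<dots> = (z [^] u \<otimes> y [^] v) [^] (a * b)" by (rule int_pow_int)
  finally show ?thesis using y z by blast
qed

lemma crt_pow:
  assumes "finite S" "\<forall>p\<in>S. nprime p" "x \<in> carrier G" "\<forall>p\<in>S. x \<in> (\<lambda>y. y [^] (p::nat)) ` carrier G"
  shows "x \<in> (\<lambda>y. y [^] (\<Prod>S)) ` carrier G"
  using assms
proof (induct S rule: finite_induct)
  case empty
  then show ?case by force
next
  case (insert q S)
  then have "x \<in> (\<lambda>y. y [^] (\<Prod>S)) ` carrier G" by blast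
  then obtain y where y: "y \<in> carrier G" "x = y [^] (\<Prod>S)" by blast
  obtain z where z: "z \<in> carrier G" "x = z [^] q" using insert.prems by blast
  have "coprime q (\<Prod>S)"
  proof (rule prod_coprime_right)
    fix i assume "i \<in> S"
    then show "coprime q i" using insert primes_coprime by (metis insertCI)
  qed
  then obtain w where "w \<in> carrier G" "x = w [^] (q * \<Prod>S)"
    using coprime_pow_inter[OF _ z(1) y(1) z(2) y(2)] by blast
  then show ?case using insert.hyps by auto
qed

lemma avoid_maximal:
  assumes fin: "finite (carrier G)" and p: "nprime p" and x: "x \<in> carrier G"
    and xn: "x \<notin> (\<lambda>y. y [^] p) ` carrier G" and N: "N > 0" and exN: "\<forall>x\<in>carrier G. x [^] (N::nat) = \<one>"
  shows "\<exists>M. maximal_subgroup M G \<and> x \<notin> M"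
proof -
  define P where "P = (\<lambda>y. y [^] p) ` carrier G"
  have Psub: "subgroup P G" unfolding P_def by (rule pow_image_subgroup[OF subgroup_self])
  define S where "S = {M. subgroup M G \<and> P \<subseteq> M \<and> x \<notin> M}"
  have "S \<subseteq> Pow (carrier G)" unfolding S_def using subgroup.subset by blast
  then have finS: "finite S" using fin finite_subset by blast
  have PS: "P \<in> S" unfolding S_def using Psub xn P_def by blast
  define m where "m = Max (card ` S)"
  have "m \<in> card ` S" unfolding m_def using finS PS by (intro Max_in) auto
  then obtain M where MS: "M \<in> S" and Mm: "card M = m" by blast
  have Mmax: "card K \<le> card M" if "K \<in> S" for K
    using Mm m_def finS that by simp
  have Ms: "subgroup M G" and PM: "P \<subseteq> M" and xM: "x \<notin> M" using MS unfolding S_def by auto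
  have Mc: "M \<subseteq> carrier G" using subgroup.subset[OF Ms] .
  have key: "K = M" if K: "subgroup K G" "M \<subseteq> K" "x \<notin> K" for K
  proof -
    have "K \<in> S" unfolding S_def using K PM by blast
    then have "card K \<le> card M" by (rule Mmax)
    moreover have "finite K" using subgroup.subset[OF K(1)] fin finite_subset by blast
    ultimately show ?thesis using K(2) card_subset_eq card_mono by (metis antisym)
  qed
  have "maximal_subgroup M G"
    unfolding maximal_subgroup_def
  proof (intro conjI allI impI)
    show "subgroup M G" by (rule Ms)
    show "M \<noteq> carrier G" using x xM by blast
    fix K assume K: "subgroup K G \<and> M \<subseteq> K"
    show "K = M \<or> K = carrier G"
    proof (cases "x \<in> K")
      case False then show ?thesis using key K by blast
    next
      case xK: True
      have "carrier G \<subseteq> K"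
      proof
        fix y assume y: "y \<in> carrier G"
        show "y \<in> K"
        proof (cases "y \<in> M")
          case True then show ?thesis using K by blast
        next
          case yM: False
          have L: "subgroup (span_el G M y) G" by (rule span_el_subgroup[OF Ms y N exN])
          have "x \<in> span_el G M y"
          proof (rule ccontr)
            assume "x \<notin> span_el G M y"
            then have "span_el G M y = M" using key[OF L] span_el_sup[OF Ms y] by blast
            then show False using span_el_sup(2)[OF Ms y] yM by blast
          qed
          then obtain m and j::nat where mj: "m \<in> M" "x = m \<otimes> y [^] j" unfolding span_el_def by blast
          have mc: "m \<in> carrier G" using mj Mc by blast
          show ?thesis
          proof (cases "p dvd j")
            case True
            then obtain q where q: "j = p * q" by blast
            have "y [^] j = (y [^] q) [^] p" using q nat_pow_pow[OF y] by (simp add: mult.commute)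
            then have "y [^] j \<in> P" unfolding P_def using y by simp
            then have "y [^] j \<in> M" using PM by blast
            then have "x \<in> M" using mj subgroup.m_closed[OF Ms] by simp
            then show ?thesis using xM by blast
          next
            case False
            obtain u v where uv: "j * u = Suc (p * v)" using bezout_prime[OF p False] by blast
            have yjc: "y [^] j \<in> carrier G" using y by simp
            have "inv m \<otimes> x = y [^] j" using mj mc yjc by (simp add: m_assoc[symmetric])
            moreover have "inv m \<otimes> x \<in> K"
              using K subgroup.m_closed[of K G] subgroup.m_inv_closed[of K G] mj xK by blast
            ultimately have yjK: "y [^] j \<in> K" by simp
            have "(y [^] j) [^] u \<in> K" using subgroup_pow_closed[of K G "y [^] j" u] K yjK by blast
            moreover have "(y [^] j) [^] u = y [^] (p * v) \<otimes> y"
              using nat_pow_pow[OF y] uv by simp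
            ultimately have A: "y [^] (p * v) \<otimes> y \<in> K" by simp
            have "y [^] (p * v) = (y [^] v) [^] p" using nat_pow_pow[OF y] by (simp add: mult.commute)
            then have "y [^] (p * v) \<in> P" unfolding P_def using y by simp
            then have B: "y [^] (p * v) \<in> K" using PM K by blast
            have "y = inv (y [^] (p * v)) \<otimes> (y [^] (p * v) \<otimes> y)" using y by (simp add: m_assoc[symmetric])
            also have "\<dots> \<in> K"
              using A B K subgroup.m_closed[of K G] subgroup.m_inv_closed[of K G] by blast
            finally show ?thesis .
          qed
        qed
      qed
      then show ?thesis using K subgroup.subset by blast
    qed
  qed
  then show ?thesis using xM by blast
qed

theorem frattini_formula:
  assumes fin: "finite (carrier G)" and N: "N > 0" and exN: "\<forall>x\<in>carrier G. x [^] (N::nat) = \<one>"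
  shows "frattini G = (\<lambda>x. x [^] (\<Prod>(prime_factors N))) ` carrier G"
proof
  show "frattini G \<subseteq> (\<lambda>x. x [^] (\<Prod>(prime_factors N))) ` carrier G"
  proof
    fix y assume yF: "y \<in> frattini G"
    then have y: "y \<in> carrier G" and yM: "\<And>M. maximal_subgroup M G \<Longrightarrow> y \<in> M"
      unfolding frattini_def by auto
    show "y \<in> (\<lambda>x. x [^] (\<Prod>(prime_factors N))) ` carrier G"
    proof (rule ccontr)
      assume nin: "y \<notin> (\<lambda>x. x [^] (\<Prod>(prime_factors N))) ` carrier G"
      have "\<exists>p\<in>prime_factors N. y \<notin> (\<lambda>x. x [^] p) ` carrier G"
        using crt_pow[of "prime_factors N" y] nin y by auto
      then obtain p where p: "p \<in> prime_factors N" "y \<notin> (\<lambda>x. x [^] p) ` carrier G" by blast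
      have "nprime p" using p(1) by auto
      then obtain M where "maximal_subgroup M G" "y \<notin> M"
        using avoid_maximal[OF fin _ y p(2) N exN] by blast
      then show False using yM by blast
    qed
  qed
  show "(\<lambda>x. x [^] (\<Prod>(prime_factors N))) ` carrier G \<subseteq> frattini G"
  proof
    fix y assume "y \<in> (\<lambda>x. x [^] (\<Prod>(prime_factors N))) ` carrier G"
    then obtain x where x: "x \<in> carrier G" "y = x [^] (\<Prod>(prime_factors N))" by blast
    have "y \<in> M" if M: "maximal_subgroup M G" for M
    proof -
      obtain p where p: "nprime p" "p dvd N" "\<forall>x\<in>carrier G. x [^] p \<in> M"
        using maximal_contains_pow[OF M N exN] by blast
      have Ms: "subgroup M G" using M unfolding maximal_subgroup_def by blast
      have "p \<in> prime_factors N" using p N by (simp add: in_prime_factors_iff)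
      then have "p dvd \<Prod>(prime_factors N)" by (intro dvd_prod_eqI[where f="\<lambda>x. x"]) auto
      then obtain q where q: "\<Prod>(prime_factors N) = p * q" by blast
      have "y = (x [^] p) [^] q" using x q nat_pow_pow by simp
      then show ?thesis using subgroup_pow_closed[OF Ms, of "x [^] p" q] p(3) x(1) by blast
    qed
    then show "y \<in> frattini G" unfolding frattini_def using x by auto
  qed
qed

end

lemma (in group) mult_inv_eq_one_iff:
  assumes "x \<in> carrier G" "y \<in> carrier G"
  shows "(x \<otimes> inv y = \<one>) = (x = y)"
proof
  assume h: "x \<otimes> inv y = \<one>"
  have "x = (x \<otimes> inv y) \<otimes> y" using assms by (simp add: m_assoc)
  then show "x = y" using h assms by simp
next
  assume "x = y" then show "x \<otimes> inv y = \<one>" using assms by simp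
qed

lemma iota_exists:
  assumes gA: "group A" and gG: "group G" and gB: "group B"
    and pi: "\<pi> \<in> hom A G" and surj: "\<pi> ` carrier A = carrier G" and ph: "\<phi> \<in> hom A B"
    and ker: "\<And>a. a \<in> carrier A \<Longrightarrow> (\<phi> a = \<one>\<^bsub>B\<^esub>) = (\<pi> a = \<one>\<^bsub>G\<^esub>)"
  shows "\<exists>\<iota>. \<iota> \<in> hom G B \<and> inj_on \<iota> (carrier G) \<and> \<iota> ` carrier G = \<phi> ` carrier A"
proof -
  interpret A: group A by (rule gA)
  interpret G: group G by (rule gG)
  interpret B: group B by (rule gB)
  interpret gp: group_hom A G \<pi> using gA gG pi by (simp add: group_hom_def group_hom_axioms_def)
  interpret gh: group_hom A B \<phi> using gA gB ph by (simp add: group_hom_def group_hom_axioms_def)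
  have eq: "(\<phi> a = \<phi> b) = (\<pi> a = \<pi> b)" if ab: "a \<in> carrier A" "b \<in> carrier A" for a b
  proof -
    have c: "a \<otimes>\<^bsub>A\<^esub> inv\<^bsub>A\<^esub> b \<in> carrier A" using ab by simp
    have "(\<phi> a = \<phi> b) = (\<phi> a \<otimes>\<^bsub>B\<^esub> inv\<^bsub>B\<^esub> \<phi> b = \<one>\<^bsub>B\<^esub>)"
      using B.mult_inv_eq_one_iff ab by simp
    also have "\<phi> a \<otimes>\<^bsub>B\<^esub> inv\<^bsub>B\<^esub> \<phi> b = \<phi> (a \<otimes>\<^bsub>A\<^esub> inv\<^bsub>A\<^esub> b)" using ab by simp
    also have "(\<phi> (a \<otimes>\<^bsub>A\<^esub> inv\<^bsub>A\<^esub> b) = \<one>\<^bsub>B\<^esub>) = (\<pi> (a \<otimes>\<^bsub>A\<^esub> inv\<^bsub>A\<^esub> b) = \<one>\<^bsub>G\<^esub>)"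
      by (rule ker[OF c])
    also have "\<pi> (a \<otimes>\<^bsub>A\<^esub> inv\<^bsub>A\<^esub> b) = \<pi> a \<otimes>\<^bsub>G\<^esub> inv\<^bsub>G\<^esub> \<pi> b" using ab by simp
    also have "(\<pi> a \<otimes>\<^bsub>G\<^esub> inv\<^bsub>G\<^esub> \<pi> b = \<one>\<^bsub>G\<^esub>) = (\<pi> a = \<pi> b)"
      using G.mult_inv_eq_one_iff ab by simp
    finally show ?thesis .
  qed
  define \<iota> where "\<iota> g = \<phi> (SOME a. a \<in> carrier A \<and> \<pi> a = g)" for g
  have ip: "\<iota> (\<pi> a) = \<phi> a" if a: "a \<in> carrier A" for a
  proof -
    have "\<exists>b. b \<in> carrier A \<and> \<pi> b = \<pi> a" using a by blast
    then have s: "(SOME b. b \<in> carrier A \<and> \<pi> b = \<pi> a) \<in> carrier A \<and> \<pi> (SOME b. b \<in> carrier A \<and> \<pi> b = \<pi> a) = \<pi> a"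
      by (rule someI_ex)
    then show ?thesis unfolding \<iota>_def using eq[OF _ a] by blast
  qed
  have pre: "\<exists>a\<in>carrier A. g = \<pi> a" if "g \<in> carrier G" for g using surj that by blast
  have "\<iota> \<in> hom G B"
  proof (rule homI)
    fix g assume "g \<in> carrier G"
    then obtain a where a: "a \<in> carrier A" "g = \<pi> a" using pre by blast
    then show "\<iota> g \<in> carrier B" using ip by simp
  next
    fix g h assume "g \<in> carrier G" "h \<in> carrier G"
    then obtain a b where a: "a \<in> carrier A" "g = \<pi> a" and b: "b \<in> carrier A" "h = \<pi> b" using pre by blast
    have "\<iota> (g \<otimes>\<^bsub>G\<^esub> h) = \<iota> (\<pi> (a \<otimes>\<^bsub>A\<^esub> b))" using a b by simp
    also have "\<dots> = \<phi> (a \<otimes>\<^bsub>A\<^esub> b)" using a b ip[of "a \<otimes>\<^bsub>A\<^esub> b"] by simp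
    also have "\<dots> = \<iota> g \<otimes>\<^bsub>B\<^esub> \<iota> h" using a b ip by simp
    finally show "\<iota> (g \<otimes>\<^bsub>G\<^esub> h) = \<iota> g \<otimes>\<^bsub>B\<^esub> \<iota> h" .
  qed
  moreover have "inj_on \<iota> (carrier G)"
  proof (rule inj_onI)
    fix g h assume "g \<in> carrier G" "h \<in> carrier G" and e: "\<iota> g = \<iota> h"
    then obtain a b where a: "a \<in> carrier A" "g = \<pi> a" and b: "b \<in> carrier A" "h = \<pi> b" using pre by blast
    then have "\<phi> a = \<phi> b" using e ip by simp
    then show "g = h" using eq[OF a(1) b(1)] a b by simp
  qed
  moreover have "\<iota> ` carrier G = \<phi> ` carrier A"
  proof -
    have "\<iota> ` carrier G = \<iota> ` \<pi> ` carrier A" using surj by simp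
    also have "\<dots> = \<phi> ` carrier A" using ip by (force simp: image_image)
    finally show ?thesis .
  qed
  ultimately show ?thesis by blast
qed

lemma iso_restrict:
  assumes "\<iota> \<in> hom G H" "inj_on \<iota> (carrier G)" "G1 \<subseteq> carrier G"
  shows "\<iota> \<in> iso (G\<lparr>carrier := G1\<rparr>) (H\<lparr>carrier := \<iota> ` G1\<rparr>)"
proof -
  have "\<iota> \<in> hom (G\<lparr>carrier := G1\<rparr>) (H\<lparr>carrier := \<iota> ` G1\<rparr>)"
    using assms(1,3) unfolding hom_def by (auto simp: subset_iff)
  moreover have "bij_betw \<iota> G1 (\<iota> ` G1)" using inj_on_subset[OF assms(2,3)] by (simp add: bij_betw_def)
  ultimately show ?thesis by (simp add: iso_def)
qed

lemma comm_group_subgroup: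
  assumes "comm_group G" "subgroup H G"
  shows "comm_group (G\<lparr>carrier := H\<rparr>)"
proof -
  interpret comm_group G by (rule assms(1))
  have g: "group (G\<lparr>carrier := H\<rparr>)" by (rule subgroup_imp_group[OF assms(2)])
  show ?thesis
  proof (rule group.group_comm_groupI[OF g])
    fix x y assume "x \<in> carrier (G\<lparr>carrier := H\<rparr>)" "y \<in> carrier (G\<lparr>carrier := H\<rparr>)"
    then have "x \<in> carrier G" "y \<in> carrier G" using subgroup.subset[OF assms(2)] by auto
    then show "x \<otimes>\<^bsub>G\<lparr>carrier := H\<rparr>\<^esub> y = y \<otimes>\<^bsub>G\<lparr>carrier := H\<rparr>\<^esub> x" using m_comm by simp
  qed
qed

definition Fg :: "'a set \<Rightarrow> nat \<Rightarrow> ('a \<Rightarrow> int) monoid" where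
  "Fg I N = product_group I (\<lambda>_. integer_mod_group N)"

lemma Fg_carrier: "N > 0 \<Longrightarrow> carrier (Fg I N) = (\<Pi>\<^sub>E i\<in>I. {0..<int N})"
  by (simp add: Fg_def carrier_integer_mod_group)

lemma Fg_mult: "x \<otimes>\<^bsub>Fg I N\<^esub> y = (\<lambda>i\<in>I. (x i + y i) mod int N)"
  by (simp add: Fg_def)

lemma Fg_one: "\<one>\<^bsub>Fg I N\<^esub> = (\<lambda>i\<in>I. 0)"
  by (simp add: Fg_def)

lemma Fg_comm_group: "comm_group (Fg I N)"
proof -
  have g: "group (Fg I N)" unfolding Fg_def by (rule product_group) simp
  show ?thesis
    by (rule group.group_comm_groupI[OF g]) (simp add: Fg_mult add.commute)
qed

lemma Fg_pow:
  "f [^]\<^bsub>Fg I N\<^esub> (k::nat) = (\<lambda>i\<in>I. (int k * f i) mod int N)"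
proof (induct k)
  case 0 then show ?case by (simp add: Fg_one)
next
  case (Suc k)
  have "f [^]\<^bsub>Fg I N\<^esub> Suc k = f [^]\<^bsub>Fg I N\<^esub> k \<otimes>\<^bsub>Fg I N\<^esub> f" by simp
  also have "\<dots> = (\<lambda>i\<in>I. (int (Suc k) * f i) mod int N)"
    unfolding Suc Fg_mult
    by (rule restrict_ext) (simp add: mod_add_left_eq mod_add_right_eq algebra_simps)
  finally show ?case .
qed

lemma Fg_finite: "finite I \<Longrightarrow> N > 0 \<Longrightarrow> finite (carrier (Fg I N))"
  by (simp add: Fg_carrier finite_PiE)

context comm_group
begin

lemma int_pow_mod_exp:
  assumes x: "x \<in> carrier G" and xn: "x [^] (n::nat) = \<one>"
  shows "x [^] (i mod int n) = x [^] (i::int)"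
proof -
  have "x [^] i = x [^] (int n * (i div int n) + i mod int n)" by simp
  also have "\<dots> = x [^] (int n * (i div int n)) \<otimes> x [^] (i mod int n)" by (rule int_pow_mult[OF x])
  also have "x [^] (int n * (i div int n)) = (x [^] (int n)) [^] (i div int n)" using int_pow_pow[OF x] by simp
  also have "x [^] (int n) = \<one>" using xn int_pow_int by metis
  finally show ?thesis using x by simp
qed

lemma piF_hom:
  assumes fin: "finite (carrier G)" and N: "N > 0" and exN: "\<forall>x\<in>carrier G. x [^] (N::nat) = \<one>"
  shows "(\<lambda>f. \<Otimes>g\<in>carrier G. g [^] (f g)) \<in> hom (Fg (carrier G) N) G"
proof (rule homI)
  fix f assume "f \<in> carrier (Fg (carrier G) N)"
  show "(\<Otimes>g\<in>carrier G. g [^] (f g)) \<in> carrier G" by (rule finprod_closed) auto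
next
  fix f h assume f: "f \<in> carrier (Fg (carrier G) N)" and h: "h \<in> carrier (Fg (carrier G) N)"
  have "(\<Otimes>g\<in>carrier G. g [^] ((f \<otimes>\<^bsub>Fg (carrier G) N\<^esub> h) g)) = (\<Otimes>g\<in>carrier G. g [^] (f g) \<otimes> g [^] (h g))"
  proof (rule finprod_cong')
    show "(\<lambda>g. g [^] (f g) \<otimes> g [^] (h g)) \<in> carrier G \<rightarrow> carrier G" by auto
    fix g assume g: "g \<in> carrier G"
    have "g [^] ((f \<otimes>\<^bsub>Fg (carrier G) N\<^esub> h) g) = g [^] ((f g + h g) mod int N)" using g by (simp add: Fg_mult)
    also have "\<dots> = g [^] (f g + h g)" using int_pow_mod_exp[OF g] exN g by blast
    also have "\<dots> = g [^] (f g) \<otimes> g [^] (h g)" using int_pow_mult[OF g] by simp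
    finally show "g [^] ((f \<otimes>\<^bsub>Fg (carrier G) N\<^esub> h) g) = g [^] (f g) \<otimes> g [^] (h g)" .
  qed simp
  also have "\<dots> = (\<Otimes>g\<in>carrier G. g [^] (f g)) \<otimes> (\<Otimes>g\<in>carrier G. g [^] (h g))"
    by (rule finprod_multf) auto
  finally show "(\<Otimes>g\<in>carrier G. g [^] ((f \<otimes>\<^bsub>Fg (carrier G) N\<^esub> h) g)) = (\<Otimes>g\<in>carrier G. g [^] (f g)) \<otimes> (\<Otimes>g\<in>carrier G. g [^] (h g))" .
qed

lemma piF_surj:
  assumes fin: "finite (carrier G)" and N: "N > 0" and exN: "\<forall>x\<in>carrier G. x [^] (N::nat) = \<one>"
  shows "(\<lambda>f. \<Otimes>g\<in>carrier G. g [^] (f g)) ` carrier (Fg (carrier G) N) = carrier G"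
proof
  show "(\<lambda>f. \<Otimes>g\<in>carrier G. g [^] (f g)) ` carrier (Fg (carrier G) N) \<subseteq> carrier G"
    by (auto intro!: finprod_closed)
  show "carrier G \<subseteq> (\<lambda>f. \<Otimes>g\<in>carrier G. g [^] (f g)) ` carrier (Fg (carrier G) N)"
  proof
    fix a assume a: "a \<in> carrier G"
    define d where "d = (\<lambda>g\<in>carrier G. if g = a then 1 mod int N else (0::int))"
    have dF: "d \<in> carrier (Fg (carrier G) N)" using N by (auto simp: Fg_carrier d_def)
    have "(\<Otimes>g\<in>carrier G. g [^] (d g)) = (\<Otimes>g\<in>carrier G. if a = g then g else \<one>)"
    proof (rule finprod_cong')
      show "(\<lambda>g. if a = g then g else \<one>) \<in> carrier G \<rightarrow> carrier G" by auto
      fix g assume g: "g \<in> carrier G"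
      show "g [^] (d g) = (if a = g then g else \<one>)"
      proof (cases "g = a")
        case True
        then have "g [^] (d g) = g [^] (1 mod int N)" using g by (simp add: d_def)
        also have "\<dots> = g [^] (1::int)" using int_pow_mod_exp[OF g] exN g by blast
        finally show ?thesis using True g by simp
      next
        case False then show ?thesis using g by (simp add: d_def)
      qed
    qed simp
    also have "\<dots> = a" using finprod_singleton[OF a fin, of "\<lambda>x. x"] by auto
    finally show "a \<in> (\<lambda>f. \<Otimes>g\<in>carrier G. g [^] (f g)) ` carrier (Fg (carrier G) N)" using dF by force
  qed
qed

lemma piF_ker:
  assumes fin: "finite (carrier G)" and n: "n > 0" and exn: "\<forall>x\<in>carrier G. x [^] (n::nat) = \<one>"
    and r: "r > 0"
    and e: "f [^]\<^bsub>Fg (carrier G) (n * r)\<^esub> (r::nat) = k [^]\<^bsub>Fg (carrier G) (n * r)\<^esub> r"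
  shows "(\<Otimes>g\<in>carrier G. g [^] (f g)) = (\<Otimes>g\<in>carrier G. g [^] (k g))"
proof (rule finprod_cong')
  show "(\<lambda>g. g [^] (k g)) \<in> carrier G \<rightarrow> carrier G" by auto
  fix g assume g: "g \<in> carrier G"
  have "(\<lambda>i\<in>carrier G. (int r * f i) mod int (n * r)) g = (\<lambda>i\<in>carrier G. (int r * k i) mod int (n * r)) g"
    using e unfolding Fg_pow by simp
  then have "(int r * f g) mod (int r * int n) = (int r * k g) mod (int r * int n)" using g by (simp add: mult.commute)
  then have "int r * (f g mod int n) = int r * (k g mod int n)" by (simp add: mod_mult_mult1)
  then have m: "f g mod int n = k g mod int n" using r by simp
  have "g [^] (f g) = g [^] (f g mod int n)" using int_pow_mod_exp[OF g] exn g by metis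
  also have "\<dots> = g [^] (k g mod int n)" using m by simp
  also have "\<dots> = g [^] (k g)" using int_pow_mod_exp[OF g] exn g by metis
  finally show "g [^] (f g) = g [^] (k g)" .
qed simp

end

lemma prime_factors_mult_rad:
  assumes n: "(n::nat) > 0"
  shows "prime_factors (n * \<Prod>(prime_factors n)) = prime_factors n"
proof -
  have r0: "\<Prod>(prime_factors n) \<noteq> 0"
    by (auto simp: prod_zero_iff)
  have "prime_factors (\<Prod>(prime_factors n)) \<subseteq> prime_factors n"
  proof
    fix p assume p: "p \<in> prime_factors (\<Prod>(prime_factors n))"
    then have pp: "nprime p" "p dvd \<Prod>(prime_factors n)" by auto
    then obtain q where q: "q \<in> prime_factors n" "p dvd q" using prime_dvd_prod_iff[of "prime_factors n" p "\<lambda>x. x"] by auto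
    then have "nprime q" by auto
    then have "p = q" using primes_dvd_imp_eq pp q by blast
    then show "p \<in> prime_factors n" using q by simp
  qed
  then show ?thesis using prime_factors_product[of n "\<Prod>(prime_factors n)"] n r0 by auto
qed

context comm_group
begin

lemma construction:
  assumes fin: "finite (carrier G)"
  shows "\<exists>(H::('a \<Rightarrow> int) set monoid) \<iota> (N::nat). comm_group H \<and> finite (carrier H) \<and> N > 0 \<and>
     (\<forall>x\<in>carrier H. x [^]\<^bsub>H\<^esub> N = \<one>\<^bsub>H\<^esub>) \<and> \<iota> \<in> hom G H \<and> inj_on \<iota> (carrier G) \<and>
     \<iota> ` carrier G = (\<lambda>x. x [^]\<^bsub>H\<^esub> (\<Prod>(prime_factors N))) ` carrier H"
proof -
  define n where "n = order G"
  have n: "n > 0" unfolding n_def order_def using fin card_gt_0_iff one_closed by blast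
  have exn: "\<forall>x\<in>carrier G. x [^] n = \<one>" unfolding n_def using pow_order_eq_1 by blast
  define r where "r = \<Prod>(prime_factors n)"
  have r: "r > 0" unfolding r_def
    by (simp add: prod_pos) (metis in_prime_factors_imp_prime prime_gt_0_nat)
  define N where "N = n * r"
  have N: "N > 0" unfolding N_def using n r by simp
  have pfN: "\<Prod>(prime_factors N) = r" unfolding N_def r_def using prime_factors_mult_rad[OF n] by simp
  have exN: "\<forall>x\<in>carrier G. x [^] N = \<one>"
  proof
    fix x assume x: "x \<in> carrier G"
    have "x [^] N = (x [^] n) [^] r" unfolding N_def using nat_pow_pow[OF x, of n r] by simp
    then show "x [^] N = \<one>" using exn x by simp
  qed
  define F where "F = Fg (carrier G) N"
  interpret F: comm_group F unfolding F_def by (rule Fg_comm_group)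
  define piF where "piF = (\<lambda>f::'a \<Rightarrow> int. \<Otimes>g\<in>carrier G. g [^] (f g))"
  have piF_hom: "piF \<in> hom F G" unfolding piF_def F_def by (rule piF_hom[OF fin N exN])
  have piF_surj: "piF ` carrier F = carrier G" unfolding piF_def F_def by (rule piF_surj[OF fin N exN])
  interpret gp: group_hom F G piF
    using piF_hom by (simp add: group_hom_def group_hom_axioms_def F.is_group is_group)
  define K where "K = kernel F G piF"
  have Ksub: "subgroup K F" unfolding K_def by (rule gp.subgroup_kernel)
  define R where "R = (\<lambda>k. k [^]\<^bsub>F\<^esub> r) ` K"
  have Rsub: "subgroup R F" unfolding R_def by (rule F.pow_image_subgroup[OF Ksub])
  have Rnorm: "R \<lhd> F" by (rule F.subgroup_imp_normal[OF Rsub])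
  interpret Rn: normal R F by (rule Rnorm)
  define H where "H = F Mod R"
  have gH: "group H" unfolding H_def by (rule Rn.factorgroup_is_group)
  interpret H: group H by (rule gH)
  define phi0 where "phi0 = (\<lambda>a. R #>\<^bsub>F\<^esub> a)"
  have phi0_hom: "phi0 \<in> hom F H" unfolding phi0_def H_def by (rule Rn.r_coset_hom_Mod)
  interpret g0: group_hom F H phi0
    using phi0_hom by (simp add: group_hom_def group_hom_axioms_def F.is_group gH)
  have carH: "carrier H = phi0 ` carrier F" unfolding H_def phi0_def by (simp add: carrier_FactGroup)
  have preH: "\<exists>a\<in>carrier F. U = phi0 a" if u: "U \<in> carrier H" for U
  proof -
    have "U \<in> phi0 ` carrier F" using u by (simp only: carH)
    then show ?thesis by (rule imageE) blast
  qed
  have cH: "comm_group H"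
  proof (rule H.group_comm_groupI)
    fix U V assume uv: "U \<in> carrier H" "V \<in> carrier H"
    obtain a where a: "a \<in> carrier F" "U = phi0 a" using preH[OF uv(1)] by blast
    obtain b where b: "b \<in> carrier F" "V = phi0 b" using preH[OF uv(2)] by blast
    have "U \<otimes>\<^bsub>H\<^esub> V = phi0 (a \<otimes>\<^bsub>F\<^esub> b)" using a(2) b(2) g0.hom_mult[OF a(1) b(1)] by simp
    also have "\<dots> = phi0 (b \<otimes>\<^bsub>F\<^esub> a)" using F.m_comm[OF a(1) b(1)] by simp
    also have "\<dots> = V \<otimes>\<^bsub>H\<^esub> U" using a(2) b(2) g0.hom_mult[OF b(1) a(1)] by simp
    finally show "U \<otimes>\<^bsub>H\<^esub> V = V \<otimes>\<^bsub>H\<^esub> U" .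
  qed
  have finF: "finite (carrier F)" unfolding F_def using Fg_finite fin N by blast
  have finH: "finite (carrier H)" unfolding carH using finF by (rule finite_imageI)
  have expH: "\<forall>x\<in>carrier H. x [^]\<^bsub>H\<^esub> N = \<one>\<^bsub>H\<^esub>"
  proof
    fix U assume u: "U \<in> carrier H"
    obtain a where a: "a \<in> carrier F" "U = phi0 a" using preH[OF u] by blast
    have "a [^]\<^bsub>F\<^esub> N = \<one>\<^bsub>F\<^esub>" unfolding F_def Fg_pow Fg_one by (rule restrict_ext) simp
    then show "U [^]\<^bsub>H\<^esub> N = \<one>\<^bsub>H\<^esub>" using a(2) g0.hom_nat_pow[OF a(1), of N] g0.hom_one by simp
  qed
  define pw where "pw = (\<lambda>a. a [^]\<^bsub>F\<^esub> r)"
  have pw_hom: "pw \<in> hom F F"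
    unfolding pw_def
  proof (rule homI)
    fix a b assume a: "a \<in> carrier F" and b: "b \<in> carrier F"
    show "(a \<otimes>\<^bsub>F\<^esub> b) [^]\<^bsub>F\<^esub> r = a [^]\<^bsub>F\<^esub> r \<otimes>\<^bsub>F\<^esub> b [^]\<^bsub>F\<^esub> r"
      by (rule F.nat_pow_distrib[OF a b])
  qed simp
  define phi where "phi = phi0 \<circ> pw"
  have phi_hom: "phi \<in> hom F H" unfolding phi_def by (rule Group.hom_compose[OF pw_hom phi0_hom])
  have ker: "(phi a = \<one>\<^bsub>H\<^esub>) = (piF a = \<one>)" if a: "a \<in> carrier F" for a
  proof -
    have ar: "a [^]\<^bsub>F\<^esub> r \<in> carrier F" using a by simp
    have "(phi a = \<one>\<^bsub>H\<^esub>) = (R #>\<^bsub>F\<^esub> (a [^]\<^bsub>F\<^esub> r) = R)"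
      unfolding phi_def phi0_def pw_def H_def by simp
    also have "\<dots> = (a [^]\<^bsub>F\<^esub> r \<in> R)"
      using F.coset_join1[OF _ ar Rsub] F.coset_join2[OF ar Rsub] by blast
    also have "\<dots> = (piF a = \<one>)"
    proof
      assume "a [^]\<^bsub>F\<^esub> r \<in> R"
      then obtain k where k: "k \<in> K" "a [^]\<^bsub>F\<^esub> r = k [^]\<^bsub>F\<^esub> r" unfolding R_def by blast
      have kc: "k \<in> carrier F" "piF k = \<one>" using k(1) unfolding K_def kernel_def by auto
      have "piF a = piF k" unfolding piF_def
        by (rule piF_ker[OF fin n exn r]) (use k(2) in \<open>simp add: F_def N_def\<close>)
      then show "piF a = \<one>" using kc by simp
    next
      assume "piF a = \<one>"
      then have "a \<in> K" unfolding K_def kernel_def using a by simp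
      then show "a [^]\<^bsub>F\<^esub> r \<in> R" unfolding R_def by blast
    qed
    finally show ?thesis .
  qed
  obtain \<iota> where iota: "\<iota> \<in> hom G H" "inj_on \<iota> (carrier G)" "\<iota> ` carrier G = phi ` carrier F"
    using iota_exists[OF F.is_group is_group gH piF_hom piF_surj phi_hom ker] by blast
  have phi_eq: "phi a = (phi0 a) [^]\<^bsub>H\<^esub> r" if "a \<in> carrier F" for a
    unfolding phi_def pw_def using g0.hom_nat_pow[OF that] by simp
  have "phi ` carrier F = (\<lambda>a. (phi0 a) [^]\<^bsub>H\<^esub> r) ` carrier F" by (rule image_cong[OF refl phi_eq])
  also have "\<dots> = (\<lambda>x. x [^]\<^bsub>H\<^esub> r) ` (phi0 ` carrier F)" by (simp only: image_image)
  also have "\<dots> = (\<lambda>x. x [^]\<^bsub>H\<^esub> r) ` carrier H" by (simp only: carH)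
  finally have img: "\<iota> ` carrier G = (\<lambda>x. x [^]\<^bsub>H\<^esub> (\<Prod>(prime_factors N))) ` carrier H"
    using iota(3) pfN by simp
  show ?thesis
  proof (intro exI conjI)
    show "comm_group H" by (rule cH)
    show "finite (carrier H)" by (rule finH)
    show "0 < N" by (rule N)
    show "\<forall>x\<in>carrier H. x [^]\<^bsub>H\<^esub> N = \<one>\<^bsub>H\<^esub>" by (rule expH)
    show "\<iota> \<in> hom G H" by (rule iota(1))
    show "inj_on \<iota> (carrier G)" by (rule iota(2))
    show "\<iota> ` carrier G = (\<lambda>x. x [^]\<^bsub>H\<^esub> (\<Prod>(prime_factors N))) ` carrier H" by (rule img)
  qed
qed

end

lemma transport_nat:
  fixes H' :: "('c, 'd) monoid_scheme" and G :: "('a, 'b) monoid_scheme"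
  assumes cH': "comm_group H'" and finH': "finite (carrier H')" and gG: "group G"
    and expH': "\<forall>x\<in>carrier H'. x [^]\<^bsub>H'\<^esub> (N::nat) = \<one>\<^bsub>H'\<^esub>"
    and ihom: "\<iota> \<in> hom G H'" and iinj: "inj_on \<iota> (carrier G)"
    and iimg: "\<iota> ` carrier G = (\<lambda>x. x [^]\<^bsub>H'\<^esub> (r::nat)) ` carrier H'"
  shows "\<exists>(H::nat monoid) \<iota>'. comm_group H \<and> finite (carrier H) \<and> (\<forall>x\<in>carrier H. x [^]\<^bsub>H\<^esub> N = \<one>\<^bsub>H\<^esub>) \<and>
     \<iota>' \<in> hom G H \<and> inj_on \<iota>' (carrier G) \<and> \<iota>' ` carrier G = (\<lambda>x. x [^]\<^bsub>H\<^esub> r) ` carrier H"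
proof -
  interpret H': comm_group H' by (rule cH')
  obtain h where h: "bij_betw h (carrier H') {0..<card (carrier H')}"
    using ex_bij_betw_finite_nat[OF finH'] by blast
  have hinj: "inj_on h (carrier H')" using h by (simp add: bij_betw_def)
  define g where "g = inv_into (carrier H') h"
  have gh: "g (h a) = a" if "a \<in> carrier H'" for a unfolding g_def using hinj that by simp
  define H :: "nat monoid" where "H = \<lparr>carrier = h ` carrier H', monoid.mult = (\<lambda>x y. h (g x \<otimes>\<^bsub>H'\<^esub> g y)), one = h \<one>\<^bsub>H'\<^esub>\<rparr>"
  have cH: "carrier H = h ` carrier H'" unfolding H_def by simp
  have oneH: "\<one>\<^bsub>H\<^esub> = h \<one>\<^bsub>H'\<^esub>" unfolding H_def by simp
  have mH: "h a \<otimes>\<^bsub>H\<^esub> h b = h (a \<otimes>\<^bsub>H'\<^esub> b)" if "a \<in> carrier H'" "b \<in> carrier H'" for a b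
    unfolding H_def using gh that by simp
  have pre: "\<exists>a\<in>carrier H'. x = h a" if "x \<in> carrier H" for x using that cH by blast
  have mon: "monoid H"
  proof (rule monoidI)
    fix x y assume "x \<in> carrier H" "y \<in> carrier H"
    then obtain a b where "a \<in> carrier H'" "x = h a" "b \<in> carrier H'" "y = h b" using pre by metis
    then show "x \<otimes>\<^bsub>H\<^esub> y \<in> carrier H" using mH cH by simp
  next
    show "\<one>\<^bsub>H\<^esub> \<in> carrier H" using oneH cH by simp
  next
    fix x y z assume "x \<in> carrier H" "y \<in> carrier H" "z \<in> carrier H"
    then obtain a b c where abc: "a \<in> carrier H'" "x = h a" "b \<in> carrier H'" "y = h b" "c \<in> carrier H'" "z = h c"
      using pre by metis
    then show "x \<otimes>\<^bsub>H\<^esub> y \<otimes>\<^bsub>H\<^esub> z = x \<otimes>\<^bsub>H\<^esub> (y \<otimes>\<^bsub>H\<^esub> z)" using mH H'.m_assoc by simp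
  next
    fix x assume "x \<in> carrier H"
    then obtain a where "a \<in> carrier H'" "x = h a" using pre by metis
    then show "\<one>\<^bsub>H\<^esub> \<otimes>\<^bsub>H\<^esub> x = x" using mH oneH by simp
  next
    fix x assume "x \<in> carrier H"
    then obtain a where "a \<in> carrier H'" "x = h a" using pre by metis
    then show "x \<otimes>\<^bsub>H\<^esub> \<one>\<^bsub>H\<^esub> = x" using mH oneH by simp
  qed
  have hhom: "h \<in> hom H' H" by (rule homI) (simp_all add: cH mH)
  have hiso: "h \<in> iso H' H" unfolding iso_def using hhom hinj cH by (simp add: bij_betw_def)
  have cHH: "comm_group H" using H'.iso_imp_comm_group[OF is_isoI[OF hiso] mon] .
  have gH: "group H" using cHH by (simp add: comm_group_def)
  have hpow: "h (x [^]\<^bsub>H'\<^esub> n) = (h x) [^]\<^bsub>H\<^esub> (n::nat)" if "x \<in> carrier H'" for x n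
    using hom_nat_pow[OF hhom that H'.is_group gH] .
  have finH: "finite (carrier H)" using cH finH' by simp
  have expH: "\<forall>x\<in>carrier H. x [^]\<^bsub>H\<^esub> N = \<one>\<^bsub>H\<^esub>"
  proof
    fix x assume "x \<in> carrier H"
    then obtain a where a: "a \<in> carrier H'" "x = h a" using pre by metis
    then have "x [^]\<^bsub>H\<^esub> N = h (a [^]\<^bsub>H'\<^esub> N)" using hpow by simp
    also have "\<dots> = \<one>\<^bsub>H\<^esub>" using expH' a oneH by simp
    finally show "x [^]\<^bsub>H\<^esub> N = \<one>\<^bsub>H\<^esub>" .
  qed
  have isub: "\<iota> ` carrier G \<subseteq> carrier H'" using ihom unfolding hom_def by auto
  have hom2: "h \<circ> \<iota> \<in> hom G H" by (rule Group.hom_compose[OF ihom hhom])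
  have inj2: "inj_on (h \<circ> \<iota>) (carrier G)" using comp_inj_on[OF iinj inj_on_subset[OF hinj isub]] .
  have "(h \<circ> \<iota>) ` carrier G = h ` (\<lambda>x. x [^]\<^bsub>H'\<^esub> r) ` carrier H'" by (simp only: image_comp[symmetric] iimg)
  also have "\<dots> = (\<lambda>x. h (x [^]\<^bsub>H'\<^esub> r)) ` carrier H'" by (simp only: image_image)
  also have "\<dots> = (\<lambda>x. (h x) [^]\<^bsub>H\<^esub> r) ` carrier H'" by (rule image_cong[OF refl hpow])
  also have "\<dots> = (\<lambda>y. y [^]\<^bsub>H\<^esub> r) ` carrier H" unfolding cH by (simp only: image_image)
  finally have img2: "(h \<circ> \<iota>) ` carrier G = (\<lambda>y. y [^]\<^bsub>H\<^esub> r) ` carrier H" .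
  show ?thesis
  proof (intro exI conjI)
    show "comm_group H" by (rule cHH)
    show "finite (carrier H)" by (rule finH)
    show "\<forall>x\<in>carrier H. x [^]\<^bsub>H\<^esub> N = \<one>\<^bsub>H\<^esub>" by (rule expH)
    show "h \<circ> \<iota> \<in> hom G H" by (rule hom2)
    show "inj_on (h \<circ> \<iota>) (carrier G)" by (rule inj2)
    show "(h \<circ> \<iota>) ` carrier G = (\<lambda>y. y [^]\<^bsub>H\<^esub> r) ` carrier H" by (rule img2)
  qed
qed

lemma frat_sub:
  assumes cH: "comm_group H" and finH: "finite (carrier H)" and N: "N > 0"
    and expH: "\<forall>x\<in>carrier H. x [^]\<^bsub>H\<^esub> (N::nat) = \<one>\<^bsub>H\<^esub>" and H1: "subgroup H1 H"
  shows "frattini (H\<lparr>carrier := H1\<rparr>) = (\<lambda>x. x [^]\<^bsub>H\<^esub> (\<Prod>(prime_factors N))) ` H1"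
proof -
  interpret H: comm_group H by (rule cH)
  have c1: "comm_group (H\<lparr>carrier := H1\<rparr>)" by (rule comm_group_subgroup[OF cH H1])
  have H1c: "H1 \<subseteq> carrier H" using subgroup.subset[OF H1] .
  have fin1: "finite (carrier (H\<lparr>carrier := H1\<rparr>))" using finite_subset[OF H1c finH] by simp
  have exp1: "\<forall>x\<in>carrier (H\<lparr>carrier := H1\<rparr>). x [^]\<^bsub>H\<lparr>carrier := H1\<rparr>\<^esub> N = \<one>\<^bsub>H\<lparr>carrier := H1\<rparr>\<^esub>"
  proof
    fix x assume "x \<in> carrier (H\<lparr>carrier := H1\<rparr>)"
    then have x: "x \<in> carrier H" using H1c by auto
    have "x [^]\<^bsub>H\<lparr>carrier := H1\<rparr>\<^esub> N = x [^]\<^bsub>H\<^esub> N" using H.nat_pow_consistent[of x N H1] by simp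
    then show "x [^]\<^bsub>H\<lparr>carrier := H1\<rparr>\<^esub> N = \<one>\<^bsub>H\<lparr>carrier := H1\<rparr>\<^esub>" using expH x by simp
  qed
  have "frattini (H\<lparr>carrier := H1\<rparr>) = (\<lambda>x. x [^]\<^bsub>H\<lparr>carrier := H1\<rparr>\<^esub> (\<Prod>(prime_factors N))) ` carrier (H\<lparr>carrier := H1\<rparr>)"
    by (rule comm_group.frattini_formula[OF c1 fin1 N exp1])
  also have "\<dots> = (\<lambda>x. x [^]\<^bsub>H\<^esub> (\<Prod>(prime_factors N))) ` H1"
  proof (rule image_cong)
    show "carrier (H\<lparr>carrier := H1\<rparr>) = H1" by simp
    fix x show "x [^]\<^bsub>H\<lparr>carrier := H1\<rparr>\<^esub> (\<Prod>(prime_factors N)) = x [^]\<^bsub>H\<^esub> (\<Prod>(prime_factors N))"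
      by (rule H.nat_pow_consistent[symmetric])
  qed
  finally show ?thesis .
qed

lemma realise:
  fixes G :: "('a, 'b) monoid_scheme" and H :: "nat monoid"
  assumes cG: "comm_group G" and finG: "finite (carrier G)"
    and cH: "comm_group H" and finH: "finite (carrier H)" and N: "N > 0"
    and expH: "\<forall>x\<in>carrier H. x [^]\<^bsub>H\<^esub> (N::nat) = \<one>\<^bsub>H\<^esub>"
    and ihom: "\<iota> \<in> hom G H" and iinj: "inj_on \<iota> (carrier G)"
    and iimg: "\<iota> ` carrier G = (\<lambda>x. x [^]\<^bsub>H\<^esub> (\<Prod>(prime_factors N))) ` carrier H"
  shows "completely_Phi_realisable G"
proof -
  interpret G: comm_group G by (rule cG)
  interpret H: comm_group H by (rule cH)
  interpret gi: group_hom G H \<iota> using ihom by (simp add: group_hom_def group_hom_axioms_def G.is_group H.is_group)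
  define r where "r = \<Prod>(prime_factors N)"
  define P where "P = (\<lambda>x. x [^]\<^bsub>H\<^esub> r) ` carrier H"
  have iP: "\<iota> ` carrier G = P" using iimg unfolding P_def r_def .
  have fs: "frattini (H\<lparr>carrier := H1\<rparr>) = (\<lambda>x. x [^]\<^bsub>H\<^esub> r) ` H1" if "subgroup H1 H" for H1
    unfolding r_def by (rule frat_sub[OF cH finH N expH that])
  have fH: "frattini H = P"
    using fs[OF H.subgroup_self] unfolding P_def by simp
  have iso0: "G \<cong> frattini_group H"
  proof -
    have "\<iota> \<in> iso (G\<lparr>carrier := carrier G\<rparr>) (H\<lparr>carrier := \<iota> ` carrier G\<rparr>)"
      by (rule iso_restrict[OF ihom iinj subset_refl])
    then have "\<iota> \<in> iso G (H\<lparr>carrier := P\<rparr>)" using iP by simp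
    then show ?thesis unfolding frattini_group_def fH by (rule is_isoI)
  qed
  have part2: "\<exists>H1. subgroup H1 H \<and> G\<lparr>carrier := G1\<rparr> \<cong> frattini_group (H\<lparr>carrier := H1\<rparr>)"
    if G1: "subgroup G1 G" for G1
  proof -
    have G1c: "G1 \<subseteq> carrier G" using subgroup.subset[OF G1] .
    have sI: "subgroup (\<iota> ` G1) H" by (rule gi.subgroup_img_is_subgroup[OF G1])
    define H1 where "H1 = {x \<in> carrier H. x [^]\<^bsub>H\<^esub> r \<in> \<iota> ` G1}"
    have sH1: "subgroup H1 H"
    proof (rule H.subgroupI)
      show "H1 \<subseteq> carrier H" unfolding H1_def by blast
      have "\<one>\<^bsub>H\<^esub> [^]\<^bsub>H\<^esub> r \<in> \<iota> ` G1" using subgroup.one_closed[OF sI] by simp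
      then show "H1 \<noteq> {}" unfolding H1_def by blast
    next
      fix x assume "x \<in> H1"
      then have x: "x \<in> carrier H" "x [^]\<^bsub>H\<^esub> r \<in> \<iota> ` G1" unfolding H1_def by auto
      have "inv\<^bsub>H\<^esub> x [^]\<^bsub>H\<^esub> r = inv\<^bsub>H\<^esub> (x [^]\<^bsub>H\<^esub> r)" using H.nat_pow_inv[OF x(1)] by simp
      also have "\<dots> \<in> \<iota> ` G1" using subgroup.m_inv_closed[OF sI x(2)] .
      finally show "inv\<^bsub>H\<^esub> x \<in> H1" unfolding H1_def using x(1) by simp
    next
      fix x y assume "x \<in> H1" "y \<in> H1"
      then have x: "x \<in> carrier H" "x [^]\<^bsub>H\<^esub> r \<in> \<iota> ` G1" and y: "y \<in> carrier H" "y [^]\<^bsub>H\<^esub> r \<in> \<iota> ` G1"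
        unfolding H1_def by auto
      have "(x \<otimes>\<^bsub>H\<^esub> y) [^]\<^bsub>H\<^esub> r = x [^]\<^bsub>H\<^esub> r \<otimes>\<^bsub>H\<^esub> y [^]\<^bsub>H\<^esub> r"
        by (rule H.nat_pow_distrib[OF x(1) y(1)])
      also have "\<dots> \<in> \<iota> ` G1" using subgroup.m_closed[OF sI x(2) y(2)] .
      finally show "x \<otimes>\<^bsub>H\<^esub> y \<in> H1" unfolding H1_def using x(1) y(1) by simp
    qed
    have "(\<lambda>x. x [^]\<^bsub>H\<^esub> r) ` H1 = \<iota> ` G1"
    proof
      show "(\<lambda>x. x [^]\<^bsub>H\<^esub> r) ` H1 \<subseteq> \<iota> ` G1" unfolding H1_def by blast
      show "\<iota> ` G1 \<subseteq> (\<lambda>x. x [^]\<^bsub>H\<^esub> r) ` H1"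
      proof
        fix y assume y: "y \<in> \<iota> ` G1"
        then have "y \<in> P" using iP G1c by blast
        then obtain x where x: "x \<in> carrier H" "y = x [^]\<^bsub>H\<^esub> r" unfolding P_def by blast
        then have "x \<in> H1" unfolding H1_def using y by simp
        then show "y \<in> (\<lambda>x. x [^]\<^bsub>H\<^esub> r) ` H1" using x by blast
      qed
    qed
    then have fr: "frattini_group (H\<lparr>carrier := H1\<rparr>) = H\<lparr>carrier := \<iota> ` G1\<rparr>"
      unfolding frattini_group_def fs[OF sH1] by simp
    have "\<iota> \<in> iso (G\<lparr>carrier := G1\<rparr>) (H\<lparr>carrier := \<iota> ` G1\<rparr>)"
      by (rule iso_restrict[OF ihom iinj G1c])
    then have "G\<lparr>carrier := G1\<rparr> \<cong> frattini_group (H\<lparr>carrier := H1\<rparr>)" unfolding fr by (rule is_isoI)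
    then show ?thesis using sH1 by blast
  qed
  have part3: "\<exists>G1. subgroup G1 G \<and> frattini_group (H\<lparr>carrier := H1\<rparr>) \<cong> G\<lparr>carrier := G1\<rparr>"
    if H1: "subgroup H1 H" for H1
  proof -
    define Q where "Q = (\<lambda>x. x [^]\<^bsub>H\<^esub> r) ` H1"
    have H1c: "H1 \<subseteq> carrier H" using subgroup.subset[OF H1] .
    have QP: "Q \<subseteq> P" unfolding Q_def P_def using H1c by blast
    have sQ: "subgroup Q H" unfolding Q_def by (rule H.pow_image_subgroup[OF H1])
    define G1 where "G1 = {g \<in> carrier G. \<iota> g \<in> Q}"
    have sG1: "subgroup G1 G"
    proof (rule G.subgroupI)
      show "G1 \<subseteq> carrier G" unfolding G1_def by blast
      have "\<iota> \<one>\<^bsub>G\<^esub> \<in> Q" using subgroup.one_closed[OF sQ] by simp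
      then show "G1 \<noteq> {}" unfolding G1_def by blast
    next
      fix x assume "x \<in> G1"
      then have x: "x \<in> carrier G" "\<iota> x \<in> Q" unfolding G1_def by auto
      have "\<iota> (inv\<^bsub>G\<^esub> x) = inv\<^bsub>H\<^esub> (\<iota> x)" using gi.hom_inv[OF x(1)] .
      also have "\<dots> \<in> Q" using subgroup.m_inv_closed[OF sQ x(2)] .
      finally show "inv\<^bsub>G\<^esub> x \<in> G1" unfolding G1_def using x(1) by simp
    next
      fix x y assume "x \<in> G1" "y \<in> G1"
      then have x: "x \<in> carrier G" "\<iota> x \<in> Q" and y: "y \<in> carrier G" "\<iota> y \<in> Q" unfolding G1_def by auto
      have "\<iota> (x \<otimes>\<^bsub>G\<^esub> y) = \<iota> x \<otimes>\<^bsub>H\<^esub> \<iota> y" using gi.hom_mult[OF x(1) y(1)] .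
      also have "\<dots> \<in> Q" using subgroup.m_closed[OF sQ x(2) y(2)] .
      finally show "x \<otimes>\<^bsub>G\<^esub> y \<in> G1" unfolding G1_def using x(1) y(1) by simp
    qed
    have G1c: "G1 \<subseteq> carrier G" unfolding G1_def by blast
    have iG1: "\<iota> ` G1 = Q"
    proof
      show "\<iota> ` G1 \<subseteq> Q" unfolding G1_def by blast
      show "Q \<subseteq> \<iota> ` G1"
      proof
        fix q assume q: "q \<in> Q"
        then have "q \<in> \<iota> ` carrier G" using QP iP by blast
        then obtain g where g: "g \<in> carrier G" "q = \<iota> g" by blast
        then have "g \<in> G1" unfolding G1_def using q by simp
        then show "q \<in> \<iota> ` G1" using g by blast
      qed
    qed
    have fr: "frattini_group (H\<lparr>carrier := H1\<rparr>) = H\<lparr>carrier := Q\<rparr>"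
      unfolding frattini_group_def fs[OF H1] Q_def by simp
    have "\<iota> \<in> iso (G\<lparr>carrier := G1\<rparr>) (H\<lparr>carrier := \<iota> ` G1\<rparr>)"
      by (rule iso_restrict[OF ihom iinj G1c])
    then have "G\<lparr>carrier := G1\<rparr> \<cong> H\<lparr>carrier := Q\<rparr>" unfolding iG1 by (rule is_isoI)
    then have "H\<lparr>carrier := Q\<rparr> \<cong> G\<lparr>carrier := G1\<rparr>"
      by (rule group.iso_sym[OF G.subgroup_imp_group[OF sG1]])
    then show ?thesis using sG1 fr by auto
  qed
  show ?thesis unfolding completely_Phi_realisable_def
    using H.is_group finH iso0 part2 part3 by blast
qed

theorem theorem3p3:
  fixes G :: "('a, 'b) monoid_scheme"
  assumes "comm_group G" and "finite (carrier G)"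
  shows "completely_Phi_realisable G"
proof -
  interpret G: comm_group G by (rule assms(1))
  obtain H' :: "('a \<Rightarrow> int) set monoid" and \<iota> and N :: nat where
    c: "comm_group H'" "finite (carrier H')" "N > 0" "\<forall>x\<in>carrier H'. x [^]\<^bsub>H'\<^esub> N = \<one>\<^bsub>H'\<^esub>"
       "\<iota> \<in> hom G H'" "inj_on \<iota> (carrier G)"
       "\<iota> ` carrier G = (\<lambda>x. x [^]\<^bsub>H'\<^esub> (\<Prod>(prime_factors N))) ` carrier H'"
    using G.construction[OF assms(2)] by (elim exE conjE) (rule that; assumption)
  obtain H :: "nat monoid" and \<iota>' where
    t: "comm_group H" "finite (carrier H)" "\<forall>x\<in>carrier H. x [^]\<^bsub>H\<^esub> N = \<one>\<^bsub>H\<^esub>"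
       "\<iota>' \<in> hom G H" "inj_on \<iota>' (carrier G)"
       "\<iota>' ` carrier G = (\<lambda>x. x [^]\<^bsub>H\<^esub> (\<Prod>(prime_factors N))) ` carrier H"
    using transport_nat[OF c(1) c(2) G.is_group c(4) c(5) c(6) c(7)] by (elim exE conjE) (rule that; assumption)
  show ?thesis by (rule realise[OF assms(1,2) t(1,2) c(3) t(3,4,5,6)])
qed

end
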